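(* Assume the following setting. Let $(E,\mathcal{E},\mu)$ be a non-atomic $\sigma$-finite measure space with $\mu(E)=\infty$. Let $(a_n)_{n\ge1}$ be positive numbers with $a_n\to\infty$ and $a_n=o(n)$. For each $n$ let $P_n$ be a probability measure on $(E,\mathcal{E})$ such that $\mu_n:=(n/a_n)P_n$ satisfies $\mu_n(B)\le\mu_{n+1}(B)$ and $\mu_n(B)\to\mu(B)$ for every $B\in\mathcal{E}$. Let $k_1,k_2\in\mathbb{N}_+$, $f\in L^2(\mu^{k_1})$, $g\in L^2(\mu^{k_2})$, and suppose either (i) $k_1\ne k_2$ and $0\le l\le\min\{k_1,k_2\}$, or (ii) $k_1=k_2$ and $0\le l<k_1$. Then $F_l^{(n)}(f,g)\to0$ as $n\to\infty$.
   Context: Write $f\otimes g(x_1,\dots,x_{k_1+k_2})=f(x_1,\dots,x_{k_1})g(x_{k_1+1},\dots,x_{k_1+k_2})$. A diagram with $l$ edges is an edge set $\mathcal{N}=\{(j_1,j_1'),\dots,(j_l,j_l')\}$ with $1\le j_s\le k_1$, $k_1+1\le j_s'\le k_1+k_2$, the $j_s$ pairwise distinct and the $j_s'$ pairwise distinct; let $\mathcal{B}(l)$ be the set of all such diagrams, so $|\mathcal{B}(l)|=\frac{k_1!k_2!}{(k_1-l)!(k_2-l)!l!}$. For $\mathcal{N}\in\mathcal{B}(l)$, $(f\otimes g)_{\mathcal{N}}$ is the function of $k_1+k_2-l$ variables obtained from $f\otimes g$ by setting $x_{j_s}=x_{j_s'}$ for $s=1,\dots,l$ (for $l=0$ it is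 $f\otimes g$). Define $$F_l^{(n)}(f,g)=\Big(\frac{n}{a_n}\Big)^{(k_1+k_2)/2}\int_{E^{k_1+k_2-l}}\frac1{|\mathcal{B}(l)|}\sum_{\mathcal{N}\in\mathcal{B}(l)}(f\otimes g)_{\mathcal{N}}\,dP_n^{k_1+k_2-l}.$$ $\mu^k$, $P_n^k$ denote $k$-fold product measures. *)

theory Defs
  imports "HOL-Probability.Probability"
begin

definition non_atomic :: "'a measure \<Rightarrow> bool" where
  "non_atomic M \<longleftrightarrow> (\<forall>A\<in>sets M. 0 < emeasure M A \<longrightarrow>
      (\<exists>B\<in>sets M. B \<subseteq> A \<and> 0 < emeasure M B \<and> emeasure M B < emeasure M A))"

text \<open>Coordinates are 0-indexed: x_1..x_{k1+k2} become x 0 .. x (k1+k2-1).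
  Functions of k variables are functions on the product space PiM {..<k}.\<close>

definition tensor :: "nat \<Rightarrow> nat \<Rightarrow> ((nat \<Rightarrow> 'a) \<Rightarrow> real) \<Rightarrow> ((nat \<Rightarrow> 'a) \<Rightarrow> real)
    \<Rightarrow> (nat \<Rightarrow> 'a) \<Rightarrow> real" where
  "tensor k1 k2 f g x = f (restrict x {..<k1}) * g (restrict (\<lambda>i. x (k1 + i)) {..<k2})"

definition diagrams :: "nat \<Rightarrow> nat \<Rightarrow> nat \<Rightarrow> (nat \<times> nat) set set" where
  "diagrams k1 k2 l = {N. N \<subseteq> {..<k1} \<times> {k1..<k1+k2} \<and> card N = l
      \<and> inj_on fst N \<and> inj_on snd N}"

text \<open>Remaining variables after identification: all indices except the second endpoints.\<close>
definition kept :: "nat \<Rightarrow> nat \<Rightarrow> (nat \<times> nat) set \<Rightarrow> nat set" where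
  "kept k1 k2 N = {..<k1+k2} - snd ` N"

definition rep :: "(nat \<times> nat) set \<Rightarrow> nat \<Rightarrow> nat" where
  "rep N i = (if i \<in> snd ` N then (THE j. (j, i) \<in> N) else i)"

text \<open>Contraction (f \<otimes> g)_N, a function of k1+k2-l variables: the kept variables are
  relabelled in increasing order by their rank in the set of kept indices.\<close>
definition contraction :: "nat \<Rightarrow> nat \<Rightarrow> (nat \<times> nat) set \<Rightarrow> ((nat \<Rightarrow> 'a) \<Rightarrow> real)
    \<Rightarrow> (nat \<Rightarrow> 'a) \<Rightarrow> real" where
  "contraction k1 k2 N h z =
     h (\<lambda>i\<in>{..<k1+k2}. z (card {m \<in> kept k1 k2 N. m < rep N i}))"

definition F_ln :: "nat \<Rightarrow> nat \<Rightarrow> ((nat \<Rightarrow> 'a) \<Rightarrow> real) \<Rightarrow> ((nat \<Rightarrow> 'a) \<Rightarrow> real)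
    \<Rightarrow> (nat \<Rightarrow> 'a measure) \<Rightarrow> (nat \<Rightarrow> real) \<Rightarrow> nat \<Rightarrow> nat \<Rightarrow> real" where
  "F_ln k1 k2 f g P a l n =
     (real n / a n) powr (real (k1 + k2) / 2) *
     integral\<^sup>L (PiM {..<k1 + k2 - l} (\<lambda>_. P n))
       (\<lambda>z. (1 / real (card (diagrams k1 k2 l))) *
             (\<Sum>N\<in>diagrams k1 k2 l. contraction k1 k2 N (tensor k1 k2 f g) z))"

end

theory Submission
  imports Defs
begin


lemma PiM_nn_mono:
  assumes I: "finite I" and sfN: "sigma_finite_measure N" and sfM: "sigma_finite_measure M"
    and sets: "sets N = sets M" and le: "\<And>A. A \<in> sets M \<Longrightarrow> emeasure N A \<le> emeasure M A"
    and h: "h \<in> borel_measurable (PiM I (\<lambda>_. M))"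
  shows "(\<integral>\<^sup>+x. h x \<partial>PiM I (\<lambda>_. N)) \<le> (\<integral>\<^sup>+x. h x \<partial>PiM I (\<lambda>_. M))"
  using I h
proof (induct I arbitrary: h rule: finite_induct)
  case empty
  then show ?case by (simp add: PiM_empty)
next
  case (insert i I)
  interpret N: product_sigma_finite "\<lambda>_. N" by (simp add: product_sigma_finite_def sfN)
  interpret M: product_sigma_finite "\<lambda>_. M" by (simp add: product_sigma_finite_def sfM)
  interpret sM: sigma_finite_measure M by (rule sfM)
  have NM: "N \<le> M"
    using sets sets_eq_imp_space_eq[OF sets] le
    by (auto simp: le_measure_iff le_fun_def) (metis emeasure_notin_sets order_refl)
  have setsPi: "sets (PiM J (\<lambda>_. N)) = sets (PiM J (\<lambda>_. M))" for J
    by (rule sets_PiM_cong) (auto simp: sets)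
  have hN: "h \<in> borel_measurable (PiM (insert i I) (\<lambda>_. N))"
    using insert(4) by (simp add: measurable_cong_sets[OF setsPi refl])
  have hM[measurable]: "h \<in> borel_measurable (PiM (insert i I) (\<lambda>_. M))" by fact
  have mi: "(\<lambda>x. \<integral>\<^sup>+y. h (x(i := y)) \<partial>M) \<in> borel_measurable (PiM I (\<lambda>_. M))"
    using insert by measurable
  have "(\<integral>\<^sup>+x. h x \<partial>PiM (insert i I) (\<lambda>_. N)) = (\<integral>\<^sup>+ x. (\<integral>\<^sup>+ y. h (x(i := y)) \<partial>N) \<partial>PiM I (\<lambda>_. N))"
    using insert hN by (simp add: N.product_nn_integral_insert)
  also have "\<dots> \<le> (\<integral>\<^sup>+ x. (\<integral>\<^sup>+ y. h (x(i := y)) \<partial>M) \<partial>PiM I (\<lambda>_. N))"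
    by (intro nn_integral_mono nn_integral_mono_measure sets NM)
  also have "\<dots> \<le> (\<integral>\<^sup>+ x. (\<integral>\<^sup>+ y. h (x(i := y)) \<partial>M) \<partial>PiM I (\<lambda>_. M))"
    by (rule insert(3)[OF mi])
  also have "\<dots> = (\<integral>\<^sup>+x. h x \<partial>PiM (insert i I) (\<lambda>_. M))"
    using insert by (simp add: M.product_nn_integral_insert)
  finally show ?case .
qed

lemma PiM_scaled_le:
  assumes I: "finite I" and P: "prob_space P" and sfM: "sigma_finite_measure M"
    and sets: "sets P = sets M" and c: "c > 0"
    and le: "\<And>A. A \<in> sets M \<Longrightarrow> ennreal c * emeasure P A \<le> emeasure M A"
    and h: "h \<in> borel_measurable (PiM I (\<lambda>_. M))"
  shows "ennreal (c ^ card I) * (\<integral>\<^sup>+x. h x \<partial>PiM I (\<lambda>_. P)) \<le> (\<integral>\<^sup>+x. h x \<partial>PiM I (\<lambda>_. M))"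
proof -
  interpret P: prob_space P by fact
  define N where "N = scale_measure (ennreal c) P"
  have fN: "finite_measure N"
    unfolding N_def by (rule finite_measureI) (simp add: space_scale_measure ennreal_mult_eq_top_iff)
  then have sfN: "sigma_finite_measure N"
    by (simp add: finite_measure.sigma_finite_measure)
  interpret NN: product_sigma_finite "\<lambda>_. N" by (simp add: product_sigma_finite_def sfN)
  interpret PP: product_sigma_finite "\<lambda>_. P"
    by (simp add: product_sigma_finite_def P.sigma_finite_measure)
  have setsN: "sets N = sets P" by (simp add: N_def)
  have setsPi: "sets (PiM J (\<lambda>_. P)) = sets (PiM J (\<lambda>_. M))" for J
    by (rule sets_PiM_cong) (auto simp: sets)
  have setsPi2: "sets (PiM J (\<lambda>_. N)) = sets (PiM J (\<lambda>_. P))" for J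
    by (rule sets_PiM_cong) (auto simp: setsN)
  have eqPi: "PiM I (\<lambda>_. N) = scale_measure (ennreal (c ^ card I)) (PiM I (\<lambda>_. P))"
  proof (rule NN.PiM_eqI[symmetric, OF I])
    show "sets (scale_measure (ennreal (c ^ card I)) (PiM I (\<lambda>_. P))) = sets (PiM I (\<lambda>_. N))"
      using setsPi2 by (simp add: setsPi2[symmetric])
    fix A assume A: "\<And>i. i \<in> I \<Longrightarrow> A i \<in> sets N"
    have "emeasure (scale_measure (ennreal (c ^ card I)) (PiM I (\<lambda>_. P))) (Pi\<^sub>E I A)
       = ennreal (c ^ card I) * (\<Prod>i\<in>I. emeasure P (A i))"
      using A I by (simp add: PP.emeasure_PiM setsN)
    also have "\<dots> = (\<Prod>i\<in>I. ennreal c * emeasure P (A i))"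
      using c I by (simp add: prod.distrib ennreal_power[symmetric])
    also have "\<dots> = (\<Prod>i\<in>I. emeasure N (A i))"
      by (simp add: N_def)
    finally show "emeasure (scale_measure (ennreal (c ^ card I)) (PiM I (\<lambda>_. P))) (Pi\<^sub>E I A)
       = (\<Prod>i\<in>I. emeasure N (A i))" .
  qed
  have hP: "h \<in> borel_measurable (PiM I (\<lambda>_. P))"
    using h by (simp add: measurable_cong_sets[OF setsPi refl])
  have "ennreal (c ^ card I) * (\<integral>\<^sup>+x. h x \<partial>PiM I (\<lambda>_. P)) = (\<integral>\<^sup>+x. h x \<partial>PiM I (\<lambda>_. N))"
    using hP by (simp add: eqPi nn_integral_scale_measure)
  also have "\<dots> \<le> (\<integral>\<^sup>+x. h x \<partial>PiM I (\<lambda>_. M))"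
    by (rule PiM_nn_mono[OF I sfN sfM _ _ h]) (simp_all add: setsN sets N_def le)
  finally show ?thesis .
qed

lemma approx_L2:
  fixes k :: nat and h :: "(nat \<Rightarrow> 'a) \<Rightarrow> real" and A :: "nat \<Rightarrow> 'a set"
  assumes A: "range A \<subseteq> sets M" "(\<Union>i. A i) = space M" "incseq A"
    and h[measurable]: "h \<in> borel_measurable (PiM {..<k} (\<lambda>_. M))"
    and hi: "integrable (PiM {..<k} (\<lambda>_. M)) (\<lambda>x. (h x)\<^sup>2)"
    and d: "\<delta> > 0"
  shows "eventually (\<lambda>m. (\<integral>\<^sup>+x. ennreal (if \<bar>h x\<bar> \<le> real m \<and> (\<forall>i<k. x i \<in> A m) then 0 else (h x)\<^sup>2)
            \<partial>PiM {..<k} (\<lambda>_. M)) \<le> ennreal \<delta>) sequentially"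
proof -
  let ?Q = "PiM {..<k} (\<lambda>_. M)"
  define s where "s m x = (if \<bar>h x\<bar> \<le> real m \<and> (\<forall>i<k. x i \<in> A m) then 0 else (h x)\<^sup>2)" for m x
  have Am[measurable]: "A m \<in> sets M" for m using A(1) by auto
  have "{x \<in> space ?Q. \<forall>i<k. x i \<in> A m} = PiE {..<k} (\<lambda>_. A m)" for m
  proof (intro set_eqI iffI)
    fix x assume "x \<in> {x \<in> space ?Q. \<forall>i<k. x i \<in> A m}"
    then show "x \<in> PiE {..<k} (\<lambda>_. A m)" by (auto simp: space_PiM PiE_iff)
  next
    fix x assume x: "x \<in> PiE {..<k} (\<lambda>_. A m)"
    then have "x \<in> space ?Q" using sets.sets_into_space[OF Am[of m]]
      unfolding space_PiM by (auto simp: PiE_iff)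
    then show "x \<in> {x \<in> space ?Q. \<forall>i<k. x i \<in> A m}" using x by (auto simp: PiE_iff)
  qed
  note setid = this
  have PiEm: "PiE {..<k} (\<lambda>_. A m) \<in> sets ?Q" for m
    by (rule sets_PiM_I_finite[OF finite_lessThan]) (rule Am)
  have [measurable]: "Measurable.pred ?Q (\<lambda>x. \<forall>i<k. x i \<in> A m)" for m
    using pred_sets1[where f="\<lambda>x. x" and N="?Q" and M="?Q" and P="\<lambda>x. \<forall>i<k. x i \<in> A m"] setid[of m] PiEm[of m] by simp
  have sm[measurable]: "s m \<in> borel_measurable ?Q" for m
    unfolding s_def by measurable
  have lim: "AE x in ?Q. (\<lambda>m. s m x) \<longlonglongrightarrow> 0"
  proof (rule AE_I2)
    fix x assume x: "x \<in> space ?Q"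
    have "\<forall>i\<in>{..<k}. eventually (\<lambda>m. x i \<in> A m) sequentially"
    proof
      fix i assume "i \<in> {..<k}"
      then have "x i \<in> space M" using x by (auto simp: space_PiM)
      then obtain j where j: "x i \<in> A j" using A(2) by auto
      show "eventually (\<lambda>m. x i \<in> A m) sequentially"
        using eventually_ge_at_top[of j] 
        by eventually_elim (use j A(3) in \<open>auto simp: incseq_def\<close>)
    qed
    then have e1: "eventually (\<lambda>m. \<forall>i\<in>{..<k}. x i \<in> A m) sequentially"
      by (rule eventually_ball_finite[rotated]) simp
    have e2: "eventually (\<lambda>m. \<bar>h x\<bar> \<le> real m) sequentially"
      using eventually_ge_at_top[of "nat \<lceil>\<bar>h x\<bar>\<rceil>"]
      by eventually_elim linarith
    have "eventually (\<lambda>m. s m x = 0) sequentially"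
      using e1 e2 by eventually_elim (auto simp: s_def)
    then show "(\<lambda>m. s m x) \<longlonglongrightarrow> 0"
      by (rule tendsto_eventually)
  qed
  have bnd: "AE x in ?Q. norm (s m x) \<le> (h x)\<^sup>2" for m
    by (auto simp: s_def)
  have conv: "(\<lambda>m. integral\<^sup>L ?Q (s m)) \<longlonglongrightarrow> integral\<^sup>L ?Q (\<lambda>x. 0)"
    by (rule integral_dominated_convergence[OF _ sm hi lim bnd]) simp
  have int: "integrable ?Q (s m)" for m
    by (rule integrable_dominated_convergence2[OF _ sm hi lim bnd]) simp
  have eq: "(\<integral>\<^sup>+x. ennreal (s m x) \<partial>?Q) = ennreal (integral\<^sup>L ?Q (s m))" for m
    by (rule nn_integral_eq_integral[OF int]) (auto simp: s_def)
  from conv have "eventually (\<lambda>m. integral\<^sup>L ?Q (s m) < \<delta>) sequentially"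
    using d by (auto dest: order_tendstoD)
  then show ?thesis
  proof eventually_elim
    case (elim m)
    have "(\<integral>\<^sup>+x. ennreal (s m x) \<partial>?Q) \<le> ennreal \<delta>"
      unfolding eq using elim by (intro ennreal_leI) simp
    then show ?case by (simp add: s_def)
  qed
qed


lemma amgm_real:
  fixes D a b t x y :: real
  assumes "D \<ge> 0" "a \<ge> 0" "b \<ge> 0" "t > 0" "D\<^sup>2 \<le> a * b"
  shows "D * \<bar>x * y\<bar> \<le> t * (a * x\<^sup>2) / 2 + (b * y\<^sup>2) / (2 * t)"
proof -
  define X where "X = t * \<bar>x\<bar>"
  define Y where "Y = \<bar>y\<bar>"
  have key: "a * X\<^sup>2 - 2 * D * X * Y + b * Y\<^sup>2 \<ge> 0"
  proof (cases "a = 0")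
    case True
    then have "D * D \<le> 0" using assms by (simp add: power2_eq_square)
    have "\<not> D > 0"
    proof
      assume "D > 0" then have "D * D > 0" by simp
      with \<open>D * D \<le> 0\<close> show False by simp
    qed
    then have "D = 0" using assms by simp
    then show ?thesis using True assms by (simp add: Y_def)
  next
    case False
    then have ap: "a > 0" using assms by simp
    have "a * (a * X\<^sup>2 - 2 * D * X * Y + b * Y\<^sup>2) = (a * X - D * Y)\<^sup>2 + (a * b - D\<^sup>2) * Y\<^sup>2"
      by (simp add: power2_eq_square algebra_simps)
    also have "\<dots> \<ge> 0" using assms by simp
    finally show ?thesis using ap by (simp add: zero_le_mult_iff)
  qed
  have "2 * t * (D * \<bar>x * y\<bar>) = 2 * D * X * Y"
    by (simp add: X_def Y_def abs_mult)
  also have "\<dots> \<le> a * X\<^sup>2 + b * Y\<^sup>2" using key by simp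
  also have "\<dots> = 2 * t * (t * (a * x\<^sup>2) / 2 + (b * y\<^sup>2) / (2 * t))"
    using assms by (simp add: X_def Y_def power2_eq_square field_simps)
  finally show ?thesis using assms by simp
qed

lemma amgm_nn:
  fixes D a b t u v :: real
  assumes "D \<ge> 0" "a \<ge> 0" "b \<ge> 0" "t > 0" "D\<^sup>2 \<le> a * b"
    and \<phi>[measurable]: "\<phi> \<in> borel_measurable Q" and \<psi>[measurable]: "\<psi> \<in> borel_measurable Q"
    and u: "(\<integral>\<^sup>+z. ennreal (a * (\<phi> z)\<^sup>2) \<partial>Q) \<le> ennreal u"
    and v: "(\<integral>\<^sup>+z. ennreal (b * (\<psi> z)\<^sup>2) \<partial>Q) \<le> ennreal v"
    and "u \<ge> 0" "v \<ge> 0"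
  shows "(\<integral>\<^sup>+z. ennreal (D * \<bar>\<phi> z * \<psi> z\<bar>) \<partial>Q) \<le> ennreal (t * u / 2 + v / (2 * t))"
proof -
  have "(\<integral>\<^sup>+z. ennreal (D * \<bar>\<phi> z * \<psi> z\<bar>) \<partial>Q)
      \<le> (\<integral>\<^sup>+z. ennreal (t / 2) * ennreal (a * (\<phi> z)\<^sup>2) + ennreal (1 / (2 * t)) * ennreal (b * (\<psi> z)\<^sup>2) \<partial>Q)"
  proof (rule nn_integral_mono)
    fix z
    have "D * \<bar>\<phi> z * \<psi> z\<bar> \<le> t / 2 * (a * (\<phi> z)\<^sup>2) + 1 / (2 * t) * (b * (\<psi> z)\<^sup>2)"
      using amgm_real[OF assms(1-5), of "\<phi> z" "\<psi> z"] by simp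
    then show "ennreal (D * \<bar>\<phi> z * \<psi> z\<bar>)
        \<le> ennreal (t / 2) * ennreal (a * (\<phi> z)\<^sup>2) + ennreal (1 / (2 * t)) * ennreal (b * (\<psi> z)\<^sup>2)"
      using assms(1-4) by (simp add: ennreal_mult[symmetric] ennreal_plus[symmetric] del: ennreal_plus)
  qed
  also have "\<dots> = ennreal (t / 2) * (\<integral>\<^sup>+z. ennreal (a * (\<phi> z)\<^sup>2) \<partial>Q) + ennreal (1 / (2 * t)) * (\<integral>\<^sup>+z. ennreal (b * (\<psi> z)\<^sup>2) \<partial>Q)"
    by (simp add: nn_integral_add nn_integral_cmult)
  also have "\<dots> \<le> ennreal (t / 2) * ennreal u + ennreal (1 / (2 * t)) * ennreal v"
    by (intro add_mono mult_left_mono u v) auto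
  also have "\<dots> = ennreal (t * u / 2 + v / (2 * t))"
    using assms by (simp add: ennreal_mult[symmetric] ennreal_plus[symmetric] del: ennreal_plus)
  finally show ?thesis .
qed


lemma marg_le:
  fixes \<tau> :: "nat \<Rightarrow> nat" and k K :: nat and h :: "(nat \<Rightarrow> 'a) \<Rightarrow> real"
  assumes P: "prob_space P" and sfM: "sigma_finite_measure M"
    and sets: "sets P = sets M" and c: "c > 0"
    and le: "\<And>A. A \<in> sets M \<Longrightarrow> ennreal c * emeasure P A \<le> emeasure M A"
    and inj: "inj_on \<tau> {..<k}" and rng: "\<tau> ` {..<k} \<subseteq> {..<K}"
    and h: "h \<in> borel_measurable (PiM {..<k} (\<lambda>_. M))"
  shows "(\<integral>\<^sup>+z. ennreal (c ^ k * (h (\<lambda>i\<in>{..<k}. z (\<tau> i)))\<^sup>2) \<partial>PiM {..<K} (\<lambda>_. P))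
     \<le> (\<integral>\<^sup>+x. ennreal ((h x)\<^sup>2) \<partial>PiM {..<k} (\<lambda>_. M))"
proof -
  let ?Q = "PiM {..<K} (\<lambda>_. P)"
  let ?U = "\<lambda>z. \<lambda>i\<in>{..<k}. z (\<tau> i)"
  have setsPi: "sets (PiM J (\<lambda>_. P)) = sets (PiM J (\<lambda>_. M))" for J
    by (rule sets_PiM_cong) (auto simp: sets)
  have hP: "h \<in> borel_measurable (PiM {..<k} (\<lambda>_. P))"
    using h by (simp add: measurable_cong_sets[OF setsPi refl])
  have U: "?U \<in> measurable ?Q (PiM {..<k} (\<lambda>_. P))"
    by (rule measurable_restrict) (use rng in \<open>auto intro!: measurable_component_singleton\<close>)
  have D: "distr ?Q (PiM {..<k} (\<lambda>_. P)) ?U = PiM {..<k} (\<lambda>_. P)"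
    using distr_PiM_reindex[of "{..<K}" "\<lambda>_. P" \<tau> "{..<k}"] P inj rng by auto
  have "(\<integral>\<^sup>+z. ennreal (c ^ k * (h (?U z))\<^sup>2) \<partial>?Q) = ennreal (c ^ k) * (\<integral>\<^sup>+z. ennreal ((h (?U z))\<^sup>2) \<partial>?Q)"
  proof -
    have "(\<lambda>z. h (?U z)) \<in> borel_measurable ?Q" using measurable_comp[OF U hP] by (simp add: comp_def)
    then have "(\<lambda>z. ennreal ((h (?U z))\<^sup>2)) \<in> borel_measurable ?Q" by measurable
    then show ?thesis using c by (simp add: ennreal_mult nn_integral_cmult)
  qed
  also have "(\<integral>\<^sup>+z. ennreal ((h (?U z))\<^sup>2) \<partial>?Q) = (\<integral>\<^sup>+x. ennreal ((h x)\<^sup>2) \<partial>distr ?Q (PiM {..<k} (\<lambda>_. P)) ?U)"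
    using hP U by (subst nn_integral_distr) (auto simp: D)
  also have "\<dots> = (\<integral>\<^sup>+x. ennreal ((h x)\<^sup>2) \<partial>PiM {..<k} (\<lambda>_. P))"
    by (simp add: D)
  also have "ennreal (c ^ k) * \<dots> \<le> (\<integral>\<^sup>+x. ennreal ((h x)\<^sup>2) \<partial>PiM {..<k} (\<lambda>_. M))"
    using PiM_scaled_le[OF finite_lessThan P sfM sets c le, of "\<lambda>x. ennreal ((h x)\<^sup>2)" k] h
    by simp
  finally show ?thesis .
qed


lemma pred_box:
  fixes k :: nat and B :: "'a set"
  assumes B: "B \<in> sets M"
  shows "Measurable.pred (PiM {..<k} (\<lambda>_. M)) (\<lambda>x. \<forall>i<k. x i \<in> B)"
proof -
  let ?Q = "PiM {..<k} (\<lambda>_. M)"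
  have setid: "{x \<in> space ?Q. \<forall>i<k. x i \<in> B} = PiE {..<k} (\<lambda>_. B)"
  proof (intro set_eqI iffI)
    fix x assume "x \<in> {x \<in> space ?Q. \<forall>i<k. x i \<in> B}"
    then show "x \<in> PiE {..<k} (\<lambda>_. B)" by (auto simp: space_PiM PiE_iff)
  next
    fix x assume x: "x \<in> PiE {..<k} (\<lambda>_. B)"
    then have "x \<in> space ?Q" using sets.sets_into_space[OF B]
      unfolding space_PiM by (auto simp: PiE_iff)
    then show "x \<in> {x \<in> space ?Q. \<forall>i<k. x i \<in> B}" using x by (auto simp: PiE_iff)
  qed
  have PiEm: "PiE {..<k} (\<lambda>_. B) \<in> sets ?Q"
    by (rule sets_PiM_I_finite[OF finite_lessThan]) (rule B)
  have "{x \<in> space ?Q. \<forall>i<k. x i \<in> B} \<in> sets ?Q" using setid PiEm by simp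
  from pred_sets1[OF this measurable_ident] show ?thesis by (simp only: id_def)
qed

lemma comp_meas:
  fixes \<tau> :: "nat \<Rightarrow> nat" and k K :: nat and h :: "(nat \<Rightarrow> 'a) \<Rightarrow> real"
  assumes sets: "sets P = sets M" and rng: "\<tau> ` {..<k} \<subseteq> {..<K}"
    and h: "h \<in> borel_measurable (PiM {..<k} (\<lambda>_. M))"
  shows "(\<lambda>z. h (\<lambda>i\<in>{..<k}. z (\<tau> i))) \<in> borel_measurable (PiM {..<K} (\<lambda>_. P))"
proof -
  have setsPi: "sets (PiM J (\<lambda>_. P)) = sets (PiM J (\<lambda>_. M))" for J
    by (rule sets_PiM_cong) (auto simp: sets)
  have hP: "h \<in> borel_measurable (PiM {..<k} (\<lambda>_. P))"
    using h by (simp add: measurable_cong_sets[OF setsPi refl])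
  have U: "(\<lambda>z. \<lambda>i\<in>{..<k}. z (\<tau> i)) \<in> measurable (PiM {..<K} (\<lambda>_. P)) (PiM {..<k} (\<lambda>_. P))"
    by (rule measurable_restrict) (use rng in \<open>auto intro!: measurable_component_singleton\<close>)
  show ?thesis using measurable_comp[OF U hP] by (simp add: comp_def)
qed


lemma abs3: "\<bar>(a::real) + b + c\<bar> \<le> \<bar>a\<bar> + \<bar>b\<bar> + \<bar>c\<bar>"
  by linarith

lemma core:
  fixes M :: "'a measure" and P :: "nat \<Rightarrow> 'a measure" and c :: "nat \<Rightarrow> real"
    and k1 k2 K :: nat and f g :: "(nat \<Rightarrow> 'a) \<Rightarrow> real" and \<tau>1 \<tau>2 :: "nat \<Rightarrow> nat"
  assumes sf: "sigma_finite_measure M"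
    and P_prob: "\<And>n. n \<ge> 1 \<Longrightarrow> prob_space (P n)"
    and P_sets: "\<And>n. n \<ge> 1 \<Longrightarrow> sets (P n) = sets M"
    and c_pos: "\<And>n. n \<ge> 1 \<Longrightarrow> c n > 0"
    and le: "\<And>n A. n \<ge> 1 \<Longrightarrow> A \<in> sets M \<Longrightarrow> ennreal (c n) * emeasure (P n) A \<le> emeasure M A"
    and c_inf: "filterlim c at_top sequentially"
    and f_meas[measurable]: "f \<in> borel_measurable (PiM {..<k1} (\<lambda>_. M))"
    and f_L2: "integrable (PiM {..<k1} (\<lambda>_. M)) (\<lambda>x. (f x)\<^sup>2)"
    and g_meas[measurable]: "g \<in> borel_measurable (PiM {..<k2} (\<lambda>_. M))"
    and g_L2: "integrable (PiM {..<k2} (\<lambda>_. M)) (\<lambda>x. (g x)\<^sup>2)"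
    and inj1: "inj_on \<tau>1 {..<k1}" and rng1: "\<tau>1 ` {..<k1} \<subseteq> {..<K}"
    and inj2: "inj_on \<tau>2 {..<k2}" and rng2: "\<tau>2 ` {..<k2} \<subseteq> {..<K}"
    and cov: "{..<K} \<subseteq> \<tau>1 ` {..<k1} \<union> \<tau>2 ` {..<k2}"
    and K: "2 * K > k1 + k2"
    and e: "\<epsilon> > 0"
  shows "eventually (\<lambda>n. ennreal (c n powr (real (k1 + k2) / 2)) *
      (\<integral>\<^sup>+z. ennreal \<bar>f (\<lambda>i\<in>{..<k1}. z (\<tau>1 i)) * g (\<lambda>i\<in>{..<k2}. z (\<tau>2 i))\<bar> \<partial>PiM {..<K} (\<lambda>_. P n))
      \<le> ennreal \<epsilon>) sequentially"
proof -
  interpret sM: sigma_finite_measure M by (rule sf)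
  obtain A :: "nat \<Rightarrow> 'a set" where A: "range A \<subseteq> sets M" "(\<Union>i. A i) = space M"
    "\<And>i. emeasure M (A i) \<noteq> \<infinity>" "incseq A"
    using sM.sigma_finite_incseq by metis
  define Nf where "Nf = integral\<^sup>L (PiM {..<k1} (\<lambda>_. M)) (\<lambda>x. (f x)\<^sup>2)"
  define Ng where "Ng = integral\<^sup>L (PiM {..<k2} (\<lambda>_. M)) (\<lambda>x. (g x)\<^sup>2)"
  have Nf0: "Nf \<ge> 0" unfolding Nf_def by simp
  have Ng0: "Ng \<ge> 0" unfolding Ng_def by simp
  have nf: "(\<integral>\<^sup>+x. ennreal ((f x)\<^sup>2) \<partial>PiM {..<k1} (\<lambda>_. M)) = ennreal Nf"
    unfolding Nf_def by (rule nn_integral_eq_integral[OF f_L2]) simp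
  have ng: "(\<integral>\<^sup>+x. ennreal ((g x)\<^sup>2) \<partial>PiM {..<k2} (\<lambda>_. M)) = ennreal Ng"
    unfolding Ng_def by (rule nn_integral_eq_integral[OF g_L2]) simp
  define \<delta> where "\<delta> = \<epsilon> / (2 + Nf + Ng)"
  have d: "\<delta> > 0" using e Nf0 Ng0 by (simp add: \<delta>_def)
  have d2: "\<delta>\<^sup>2 > 0" using d by simp
  have "eventually (\<lambda>m. (\<integral>\<^sup>+x. ennreal (if \<bar>f x\<bar> \<le> real m \<and> (\<forall>i<k1. x i \<in> A m) then 0 else (f x)\<^sup>2)
            \<partial>PiM {..<k1} (\<lambda>_. M)) \<le> ennreal (\<delta>\<^sup>2)
       \<and> (\<integral>\<^sup>+x. ennreal (if \<bar>g x\<bar> \<le> real m \<and> (\<forall>i<k2. x i \<in> A m) then 0 else (g x)\<^sup>2)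
            \<partial>PiM {..<k2} (\<lambda>_. M)) \<le> ennreal (\<delta>\<^sup>2)) sequentially"
    using approx_L2[OF A(1,2,4) f_meas f_L2 d2] approx_L2[OF A(1,2,4) g_meas g_L2 d2]
    by (rule eventually_conj)
  then obtain m where m1: "(\<integral>\<^sup>+x. ennreal (if \<bar>f x\<bar> \<le> real m \<and> (\<forall>i<k1. x i \<in> A m) then 0 else (f x)\<^sup>2)
            \<partial>PiM {..<k1} (\<lambda>_. M)) \<le> ennreal (\<delta>\<^sup>2)"
    and m2: "(\<integral>\<^sup>+x. ennreal (if \<bar>g x\<bar> \<le> real m \<and> (\<forall>i<k2. x i \<in> A m) then 0 else (g x)\<^sup>2)
            \<partial>PiM {..<k2} (\<lambda>_. M)) \<le> ennreal (\<delta>\<^sup>2)"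
    by (metis (no_types, lifting) eventually_sequentially order_refl)
  define C where "C = real m"
  define B where "B = A m"
  have B[measurable]: "B \<in> sets M" using A(1) by (auto simp: B_def)
  define mB where "mB = measure M B"
  have mB0: "mB \<ge> 0" by (simp add: mB_def)
  have emB: "emeasure M B = ennreal mB"
    using A(3)[of m] by (simp add: B_def mB_def emeasure_eq_ennreal_measure)
  define good1 where "good1 x = (\<bar>f x\<bar> \<le> C \<and> (\<forall>i<k1. x i \<in> B))" for x
  define good2 where "good2 x = (\<bar>g x\<bar> \<le> C \<and> (\<forall>i<k2. x i \<in> B))" for x
  define f1 where "f1 x = (if good1 x then f x else 0)" for x
  define f2 where "f2 x = (if good1 x then 0 else f x)" for x
  define g1 where "g1 x = (if good2 x then g x else 0)" for x
  define g2 where "g2 x = (if good2 x then 0 else g x)" for x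
  have [measurable]: "Measurable.pred (PiM {..<k1} (\<lambda>_. M)) good1"
    unfolding good1_def using pred_box[OF B, of k1] by measurable
  have [measurable]: "Measurable.pred (PiM {..<k2} (\<lambda>_. M)) good2"
    unfolding good2_def using pred_box[OF B, of k2] by measurable
  have f1m[measurable]: "f1 \<in> borel_measurable (PiM {..<k1} (\<lambda>_. M))" unfolding f1_def by measurable
  have f2m[measurable]: "f2 \<in> borel_measurable (PiM {..<k1} (\<lambda>_. M))" unfolding f2_def by measurable
  have g1m[measurable]: "g1 \<in> borel_measurable (PiM {..<k2} (\<lambda>_. M))" unfolding g1_def by measurable
  have g2m[measurable]: "g2 \<in> borel_measurable (PiM {..<k2} (\<lambda>_. M))" unfolding g2_def by measurable
  have hf2: "(\<integral>\<^sup>+x. ennreal ((f2 x)\<^sup>2) \<partial>PiM {..<k1} (\<lambda>_. M)) \<le> ennreal (\<delta>\<^sup>2)"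
  proof -
    have "(\<lambda>x. ennreal ((f2 x)\<^sup>2)) = (\<lambda>x. ennreal (if \<bar>f x\<bar> \<le> real m \<and> (\<forall>i<k1. x i \<in> A m) then 0 else (f x)\<^sup>2))"
      by (auto simp: f2_def good1_def C_def B_def fun_eq_iff)
    then show ?thesis using m1 by simp
  qed
  have hg2: "(\<integral>\<^sup>+x. ennreal ((g2 x)\<^sup>2) \<partial>PiM {..<k2} (\<lambda>_. M)) \<le> ennreal (\<delta>\<^sup>2)"
  proof -
    have "(\<lambda>x. ennreal ((g2 x)\<^sup>2)) = (\<lambda>x. ennreal (if \<bar>g x\<bar> \<le> real m \<and> (\<forall>i<k2. x i \<in> A m) then 0 else (g x)\<^sup>2))"
      by (auto simp: g2_def good2_def C_def B_def fun_eq_iff)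
    then show ?thesis using m2 by simp
  qed
  have hf1: "(\<integral>\<^sup>+x. ennreal ((f1 x)\<^sup>2) \<partial>PiM {..<k1} (\<lambda>_. M)) \<le> ennreal Nf"
    unfolding nf[symmetric] by (intro nn_integral_mono) (simp add: f1_def)
  define s where "s = real (k1 + k2) / 2"
  have sK: "s - real K < 0" using K by (simp add: s_def)
  have "((\<lambda>n. C\<^sup>2 * mB ^ K * c n powr (s - real K)) \<longlongrightarrow> C\<^sup>2 * mB ^ K * 0) sequentially"
    by (intro tendsto_mult tendsto_const tendsto_neg_powr[OF sK c_inf])
  then have ev1: "eventually (\<lambda>n. C\<^sup>2 * mB ^ K * c n powr (s - real K) < \<epsilon> / 2) sequentially"
    using e by (intro order_tendstoD(2)) auto
  show ?thesis
    using ev1 eventually_ge_at_top[of 1]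
  proof eventually_elim
    case (elim n)
    let ?Q = "PiM {..<K} (\<lambda>_. P n)"
    let ?U1 = "\<lambda>z. \<lambda>i\<in>{..<k1}. z (\<tau>1 i)"
    let ?U2 = "\<lambda>z. \<lambda>i\<in>{..<k2}. z (\<tau>2 i)"
    define cn where "cn = c n"
    have cn: "cn > 0" using c_pos elim(2) by (simp add: cn_def)
    define D where "D = cn powr s"
    have D0: "D \<ge> 0" by (simp add: D_def)
    have Pn: "prob_space (P n)" using P_prob elim(2) by simp
    interpret Pn': prob_space "P n" by (rule Pn)
    have Ps: "sets (P n) = sets M" using P_sets elim(2) by simp
    have len: "\<And>A. A \<in> sets M \<Longrightarrow> ennreal cn * emeasure (P n) A \<le> emeasure M A"
      using le elim(2) by (simp add: cn_def)
    have cm1[measurable]: "(\<lambda>z. h (?U1 z)) \<in> borel_measurable ?Q"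
      if "h \<in> borel_measurable (PiM {..<k1} (\<lambda>_. M))" for h :: "(nat \<Rightarrow> 'a) \<Rightarrow> real"
      using comp_meas[OF Ps rng1 that] .
    have cm2[measurable]: "(\<lambda>z. h (?U2 z)) \<in> borel_measurable ?Q"
      if "h \<in> borel_measurable (PiM {..<k2} (\<lambda>_. M))" for h :: "(nat \<Rightarrow> 'a) \<Rightarrow> real"
      using comp_meas[OF Ps rng2 that] .
    have DD: "D\<^sup>2 \<le> cn ^ k1 * cn ^ k2"
    proof -
      have "D\<^sup>2 = cn powr (s + s)" by (simp add: D_def power2_eq_square powr_add[symmetric])
      also have "s + s = real (k1 + k2)" by (simp add: s_def)
      also have "cn powr real (k1 + k2) = cn ^ (k1 + k2)" using cn powr_realpow[of cn "k1 + k2"] by (simp only: of_nat_add)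
      finally show ?thesis by (simp add: power_add)
    qed
    have T2: "(\<integral>\<^sup>+z. ennreal (D * \<bar>f2 (?U1 z) * g (?U2 z)\<bar>) \<partial>?Q)
        \<le> ennreal ((1 / \<delta>) * \<delta>\<^sup>2 / 2 + Ng / (2 * (1 / \<delta>)))"
    proof (rule amgm_nn[OF D0 _ _ _ DD])
      show "(\<integral>\<^sup>+z. ennreal (cn ^ k1 * (f2 (?U1 z))\<^sup>2) \<partial>?Q) \<le> ennreal (\<delta>\<^sup>2)"
        using marg_le[OF Pn sf Ps cn len inj1 rng1 f2m] hf2 by (rule order_trans)
      show "(\<integral>\<^sup>+z. ennreal (cn ^ k2 * (g (?U2 z))\<^sup>2) \<partial>?Q) \<le> ennreal Ng"
        using marg_le[OF Pn sf Ps cn len inj2 rng2 g_meas] ng by simp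
    qed (use cn d Ng0 in auto)
    have T3: "(\<integral>\<^sup>+z. ennreal (D * \<bar>f1 (?U1 z) * g2 (?U2 z)\<bar>) \<partial>?Q)
        \<le> ennreal (\<delta> * Nf / 2 + \<delta>\<^sup>2 / (2 * \<delta>))"
    proof (rule amgm_nn[OF D0 _ _ _ DD])
      show "(\<integral>\<^sup>+z. ennreal (cn ^ k1 * (f1 (?U1 z))\<^sup>2) \<partial>?Q) \<le> ennreal Nf"
        using marg_le[OF Pn sf Ps cn len inj1 rng1 f1m] hf1 by (rule order_trans)
      show "(\<integral>\<^sup>+z. ennreal (cn ^ k2 * (g2 (?U2 z))\<^sup>2) \<partial>?Q) \<le> ennreal (\<delta>\<^sup>2)"
        using marg_le[OF Pn sf Ps cn len inj2 rng2 g2m] hg2 by (rule order_trans)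
    qed (use cn d Nf0 in auto)
    define pB where "pB = measure (P n) B"
    have T1: "(\<integral>\<^sup>+z. ennreal (D * \<bar>f1 (?U1 z) * g1 (?U2 z)\<bar>) \<partial>?Q) \<le> ennreal (D * C\<^sup>2 * pB ^ K)"
    proof -
      interpret PP: product_sigma_finite "\<lambda>_. P n"
        by (simp add: product_sigma_finite_def Pn'.sigma_finite_measure)
      let ?box = "PiE {..<K} (\<lambda>_. B)"
      have Bn: "B \<in> sets (P n)" using B Ps by simp
      have boxm: "?box \<in> sets ?Q"
        by (rule sets_PiM_I_finite[OF finite_lessThan]) (rule Bn)
      have C0: "C \<ge> 0" by (simp add: C_def)
      have f1b: "\<bar>f1 y\<bar> \<le> C" for y by (simp add: f1_def good1_def C0)
      have g1b: "\<bar>g1 y\<bar> \<le> C" for y by (simp add: g1_def good2_def C0)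
      have pw: "ennreal (D * \<bar>f1 (?U1 z) * g1 (?U2 z)\<bar>) \<le> ennreal (D * C\<^sup>2) * indicator ?box z"
        if z: "z \<in> space ?Q" for z
      proof (cases "z \<in> ?box")
        case True
        have "\<bar>f1 (?U1 z) * g1 (?U2 z)\<bar> \<le> C * C"
          unfolding abs_mult by (intro mult_mono f1b g1b) (auto simp: C0)
        then have "D * \<bar>f1 (?U1 z) * g1 (?U2 z)\<bar> \<le> D * C\<^sup>2"
          using D0 by (simp add: power2_eq_square mult_left_mono)
        then show ?thesis using True by (simp add: ennreal_leI)
      next
        case False
        have zext: "z \<in> extensional {..<K}" using z by (simp add: space_PiM PiE_def)
        obtain j where j: "j < K" "z j \<notin> B"
          using False zext by (auto simp: PiE_def Pi_def)
        have "f1 (?U1 z) = 0 \<or> g1 (?U2 z) = 0"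
        proof -
          from j cov obtain i where "(i < k1 \<and> \<tau>1 i = j) \<or> (i < k2 \<and> \<tau>2 i = j)" by force
          then show ?thesis
          proof
            assume i: "i < k1 \<and> \<tau>1 i = j"
            then have "\<not> good1 (?U1 z)" using j by (auto simp: good1_def)
            then show ?thesis by (simp add: f1_def)
          next
            assume i: "i < k2 \<and> \<tau>2 i = j"
            then have "\<not> good2 (?U2 z)" using j by (auto simp: good2_def)
            then show ?thesis by (simp add: g1_def)
          qed
        qed
        then show ?thesis by auto
      qed
      have "(\<integral>\<^sup>+z. ennreal (D * \<bar>f1 (?U1 z) * g1 (?U2 z)\<bar>) \<partial>?Q) \<le> (\<integral>\<^sup>+z. ennreal (D * C\<^sup>2) * indicator ?box z \<partial>?Q)"
        by (rule nn_integral_mono) (rule pw)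
      also have "\<dots> = ennreal (D * C\<^sup>2) * emeasure ?Q ?box"
        using boxm by (rule nn_integral_cmult_indicator)
      also have "emeasure ?Q ?box = (\<Prod>j\<in>{..<K}. emeasure (P n) B)"
        using Bn by (intro PP.emeasure_PiM) auto
      also have "\<dots> = ennreal (pB ^ K)"
        using Pn'.emeasure_eq_measure[of B]
        by (simp add: pB_def ennreal_power)
      also have "ennreal (D * C\<^sup>2) * ennreal (pB ^ K) = ennreal (D * C\<^sup>2 * pB ^ K)"
        by (rule ennreal_mult[symmetric]) (use D0 in \<open>auto simp: pB_def\<close>)
      finally show ?thesis .
    qed
    have X1: "D * C\<^sup>2 * pB ^ K \<le> C\<^sup>2 * mB ^ K * cn powr (s - real K)"
    proof -
      have pB0: "pB \<ge> 0" by (simp add: pB_def)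
      have "ennreal (cn * pB) \<le> ennreal mB"
        using len[OF B] cn emB Pn'.emeasure_eq_measure[of B]
        by (simp add: pB_def ennreal_mult[symmetric])
      then have "cn * pB \<le> mB" using mB0 by (simp add: ennreal_le_iff)
      then have "pB \<le> mB / cn" using cn by (simp add: field_simps)
      then have "pB ^ K \<le> (mB / cn) ^ K" using pB0 by (intro power_mono) auto
      then have "D * C\<^sup>2 * pB ^ K \<le> D * C\<^sup>2 * (mB / cn) ^ K"
        using D0 by (intro mult_left_mono) auto
      also have "\<dots> = C\<^sup>2 * mB ^ K * (cn powr s / cn powr real K)"
        using cn by (simp add: D_def power_divide powr_realpow)
      also have "cn powr s / cn powr real K = cn powr (s - real K)"
        by (simp add: powr_diff)
      finally show ?thesis .
    qed
    have split: "(\<integral>\<^sup>+z. ennreal (D * \<bar>f (?U1 z) * g (?U2 z)\<bar>) \<partial>?Q)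
       \<le> (\<integral>\<^sup>+z. ennreal (D * \<bar>f1 (?U1 z) * g1 (?U2 z)\<bar>) \<partial>?Q)
        + (\<integral>\<^sup>+z. ennreal (D * \<bar>f2 (?U1 z) * g (?U2 z)\<bar>) \<partial>?Q)
        + (\<integral>\<^sup>+z. ennreal (D * \<bar>f1 (?U1 z) * g2 (?U2 z)\<bar>) \<partial>?Q)"
    proof -
      have pw: "ennreal (D * \<bar>f y1 * g y2\<bar>) \<le> ennreal (D * \<bar>f1 y1 * g1 y2\<bar>) + ennreal (D * \<bar>f2 y1 * g y2\<bar>)
          + ennreal (D * \<bar>f1 y1 * g2 y2\<bar>)" for y1 y2
      proof -
        have ef: "f y1 = f1 y1 + f2 y1" by (simp add: f1_def f2_def)
        have eg: "g y2 = g1 y2 + g2 y2" by (simp add: g1_def g2_def)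
        have "f y1 * g y2 = f1 y1 * g1 y2 + f2 y1 * g y2 + f1 y1 * g2 y2"
        proof -
          have "f y1 * g y2 - (f1 y1 * g1 y2 + f2 y1 * g y2 + f1 y1 * g2 y2)
              = (f y1 - f1 y1 - f2 y1) * g y2 + f1 y1 * (g y2 - g1 y2 - g2 y2)"
            by (simp add: algebra_simps)
          also have "\<dots> = 0" using ef eg by simp
          finally show ?thesis by simp
        qed
        then have "\<bar>f y1 * g y2\<bar> \<le> \<bar>f1 y1 * g1 y2\<bar> + \<bar>f2 y1 * g y2\<bar> + \<bar>f1 y1 * g2 y2\<bar>"
          using abs3 by metis
        then have "D * \<bar>f y1 * g y2\<bar> \<le> D * \<bar>f1 y1 * g1 y2\<bar> + D * \<bar>f2 y1 * g y2\<bar> + D * \<bar>f1 y1 * g2 y2\<bar>"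
          using D0 by (metis distrib_left mult_left_mono)
        then show ?thesis using D0
          by (simp add: ennreal_plus[symmetric] del: ennreal_plus)
      qed
      have "(\<integral>\<^sup>+z. ennreal (D * \<bar>f (?U1 z) * g (?U2 z)\<bar>) \<partial>?Q)
         \<le> (\<integral>\<^sup>+z. (ennreal (D * \<bar>f1 (?U1 z) * g1 (?U2 z)\<bar>) + ennreal (D * \<bar>f2 (?U1 z) * g (?U2 z)\<bar>))
          + ennreal (D * \<bar>f1 (?U1 z) * g2 (?U2 z)\<bar>) \<partial>?Q)"
        by (rule nn_integral_mono) (rule pw)
      also have "\<dots> = (\<integral>\<^sup>+z. ennreal (D * \<bar>f1 (?U1 z) * g1 (?U2 z)\<bar>) + ennreal (D * \<bar>f2 (?U1 z) * g (?U2 z)\<bar>) \<partial>?Q)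
          + (\<integral>\<^sup>+z. ennreal (D * \<bar>f1 (?U1 z) * g2 (?U2 z)\<bar>) \<partial>?Q)"
        by (rule nn_integral_add) measurable
      also have "(\<integral>\<^sup>+z. ennreal (D * \<bar>f1 (?U1 z) * g1 (?U2 z)\<bar>) + ennreal (D * \<bar>f2 (?U1 z) * g (?U2 z)\<bar>) \<partial>?Q)
          = (\<integral>\<^sup>+z. ennreal (D * \<bar>f1 (?U1 z) * g1 (?U2 z)\<bar>) \<partial>?Q) + (\<integral>\<^sup>+z. ennreal (D * \<bar>f2 (?U1 z) * g (?U2 z)\<bar>) \<partial>?Q)"
        by (rule nn_integral_add) measurable
      finally show ?thesis .
    qed
    have lhs: "ennreal (c n powr (real (k1 + k2) / 2)) *
      (\<integral>\<^sup>+z. ennreal \<bar>f (?U1 z) * g (?U2 z)\<bar> \<partial>?Q) = (\<integral>\<^sup>+z. ennreal (D * \<bar>f (?U1 z) * g (?U2 z)\<bar>) \<partial>?Q)"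
    proof -
      have "(\<lambda>z. ennreal \<bar>f (?U1 z) * g (?U2 z)\<bar>) \<in> borel_measurable ?Q" by measurable
      then show ?thesis using D0
        by (simp add: D_def cn_def s_def ennreal_mult nn_integral_cmult)
    qed
    have "(\<integral>\<^sup>+z. ennreal (D * \<bar>f (?U1 z) * g (?U2 z)\<bar>) \<partial>?Q)
       \<le> ennreal (D * C\<^sup>2 * pB ^ K) + ennreal ((1 / \<delta>) * \<delta>\<^sup>2 / 2 + Ng / (2 * (1 / \<delta>)))
         + ennreal (\<delta> * Nf / 2 + \<delta>\<^sup>2 / (2 * \<delta>))"
      using split T1 T2 T3 by (meson add_mono order_trans)
    also have "\<dots> = ennreal (D * C\<^sup>2 * pB ^ K + ((1 / \<delta>) * \<delta>\<^sup>2 / 2 + Ng / (2 * (1 / \<delta>)))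
         + (\<delta> * Nf / 2 + \<delta>\<^sup>2 / (2 * \<delta>)))"
    proof -
      have pB0: "pB \<ge> 0" by (simp add: pB_def)
      have a1: "0 \<le> D * C\<^sup>2 * pB ^ K" using D0 pB0 by simp
      have a2: "0 \<le> (1 / \<delta>) * \<delta>\<^sup>2 / 2 + Ng / (2 * (1 / \<delta>))" using d Ng0 by simp
      have a3: "0 \<le> \<delta> * Nf / 2 + \<delta>\<^sup>2 / (2 * \<delta>)" using d Nf0 by simp
      show ?thesis
        by (simp only: ennreal_plus[OF add_nonneg_nonneg[OF a1 a2] a3] ennreal_plus[OF a1 a2])
    qed
    also have "\<dots> \<le> ennreal \<epsilon>"
    proof (rule ennreal_leI)
      have "(1 / \<delta>) * \<delta>\<^sup>2 / 2 + Ng / (2 * (1 / \<delta>)) + (\<delta> * Nf / 2 + \<delta>\<^sup>2 / (2 * \<delta>))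
          = \<delta> * (2 + Nf + Ng) / 2"
        using d by (simp add: field_simps power2_eq_square)
      also have "\<dots> = \<epsilon> / 2" using Nf0 Ng0 by (simp add: \<delta>_def)
      finally show "D * C\<^sup>2 * pB ^ K + ((1 / \<delta>) * \<delta>\<^sup>2 / 2 + Ng / (2 * (1 / \<delta>)))
         + (\<delta> * Nf / 2 + \<delta>\<^sup>2 / (2 * \<delta>)) \<le> \<epsilon>"
        using X1 elim(1) by (simp add: cn_def)
    qed
    finally show ?case using lhs by (simp add: s_def)
  qed
qed



lemma rank_facts:
  fixes S :: "nat set"
  assumes "finite S"
  shows "inj_on (\<lambda>i. card {m \<in> S. m < i}) S"
    and "(\<lambda>i. card {m \<in> S. m < i}) ` S = {..<card S}"
proof -
  let ?r = "\<lambda>i. card {m \<in> S. m < i}"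
  have mono: "?r i < ?r j" if "i \<in> S" "j \<in> S" "i < j" for i j
  proof (rule psubset_card_mono)
    show "finite {m \<in> S. m < j}" using assms by simp
    show "{m \<in> S. m < i} \<subset> {m \<in> S. m < j}" using that by auto
  qed
  show inj: "inj_on ?r S"
  proof (rule inj_onI)
    fix i j assume "i \<in> S" "j \<in> S" "?r i = ?r j"
    then show "i = j" using mono[of i j] mono[of j i] by (cases i j rule: linorder_cases) auto
  qed
  have sub: "?r ` S \<subseteq> {..<card S}"
  proof
    fix y assume "y \<in> ?r ` S"
    then obtain i where i: "i \<in> S" "y = ?r i" by auto
    have "{m \<in> S. m < i} \<subset> S" using i by auto
    then have "?r i < card S" using assms by (intro psubset_card_mono) auto
    then show "y \<in> {..<card S}" using i by simp
  qed
  have "card (?r ` S) = card S" using card_image[OF inj] .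
  then show "?r ` S = {..<card S}"
    using sub by (intro card_subset_eq) auto
qed

lemma diagram_facts:
  assumes N: "N \<in> diagrams k1 k2 l"
  defines "\<rho> \<equiv> \<lambda>i. card {m \<in> kept k1 k2 N. m < rep N i}"
  shows "inj_on \<rho> {..<k1}" "\<rho> ` {..<k1} \<subseteq> {..<k1 + k2 - l}"
    "inj_on (\<lambda>i. \<rho> (k1 + i)) {..<k2}" "(\<lambda>i. \<rho> (k1 + i)) ` {..<k2} \<subseteq> {..<k1 + k2 - l}"
    "{..<k1 + k2 - l} \<subseteq> \<rho> ` {..<k1} \<union> (\<lambda>i. \<rho> (k1 + i)) ` {..<k2}"
proof -
  let ?S = "kept k1 k2 N"
  let ?r = "\<lambda>i. card {m \<in> ?S. m < i}"
  have Nsub: "N \<subseteq> {..<k1} \<times> {k1..<k1+k2}" and cardN: "card N = l"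
    and injf: "inj_on fst N" and injs: "inj_on snd N"
    using N by (auto simp: diagrams_def)
  have finN: "finite N" using Nsub by (rule finite_subset) auto
  have sndsub: "snd ` N \<subseteq> {k1..<k1+k2}" using Nsub by auto
  have cards: "card (snd ` N) = l" using card_image[OF injs] cardN by simp
  have finS: "finite ?S" by (simp add: kept_def)
  have cardS: "card ?S = k1 + k2 - l"
    unfolding kept_def using sndsub cards finN by (subst card_Diff_subset) auto
  have lowS: "i \<in> ?S" if "i < k1" for i using that sndsub by (auto simp: kept_def)
  have rep_in: "(rep N x, x) \<in> N" if xN: "x \<in> snd ` N" for x
  proof -
    obtain j where j: "(j, x) \<in> N" using xN by force
    have "(THE j. (j, x) \<in> N) = j"
    proof (rule the_equality)
      show "(j, x) \<in> N" by fact
      fix j' assume "(j', x) \<in> N"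
      then show "j' = j" using inj_onD[OF injs, of "(j', x)" "(j, x)"] j by auto
    qed
    then show ?thesis using j xN by (simp add: rep_def)
  qed
  have rep_notin: "rep N x = x" if "x \<notin> snd ` N" for x using that by (simp add: rep_def)
  have repS: "rep N x \<in> ?S" if "x < k1 + k2" for x
  proof (cases "x \<in> snd ` N")
    case True
    then have "rep N x < k1" using rep_in[OF True] Nsub by auto
    then show ?thesis by (rule lowS)
  next
    case False
    then show ?thesis using that by (simp add: rep_notin kept_def)
  qed
  note rk = rank_facts[OF finS]
  have rhoK: "\<rho> x < k1 + k2 - l" if "x < k1 + k2" for x
  proof -
    have "?r (rep N x) \<in> ?r ` ?S" using repS[OF that] by blast
    then show ?thesis unfolding rk(2) cardS \<rho>_def by simp
  qed
  have rep_low: "rep N i = i" if "i < k1" for i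
    using that sndsub by (intro rep_notin) auto
  show "inj_on \<rho> {..<k1}"
  proof (rule inj_onI)
    fix i j assume "i \<in> {..<k1}" "j \<in> {..<k1}" "\<rho> i = \<rho> j"
    then show "i = j" using inj_onD[OF rk(1), of i j] lowS rep_low by (auto simp: \<rho>_def)
  qed
  show "\<rho> ` {..<k1} \<subseteq> {..<k1 + k2 - l}" using rhoK by auto
  show "(\<lambda>i. \<rho> (k1 + i)) ` {..<k2} \<subseteq> {..<k1 + k2 - l}" using rhoK by auto
  show "inj_on (\<lambda>i. \<rho> (k1 + i)) {..<k2}"
  proof (rule inj_onI)
    fix i j assume i: "i \<in> {..<k2}" and j: "j \<in> {..<k2}" and eq: "\<rho> (k1 + i) = \<rho> (k1 + j)"
    have "rep N (k1 + i) = rep N (k1 + j)"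
      using inj_onD[OF rk(1) _ repS repS] eq i j by (simp add: \<rho>_def)
    then show "i = j"
    proof (cases "k1 + i \<in> snd ` N"; cases "k1 + j \<in> snd ` N")
      assume a: "k1 + i \<in> snd ` N" "k1 + j \<in> snd ` N" "rep N (k1 + i) = rep N (k1 + j)"
      have "(rep N (k1 + i), k1 + i) = (rep N (k1 + j), k1 + j)"
        using inj_onD[OF injf _ rep_in[OF a(1)] rep_in[OF a(2)]] a(3) by simp
      then show ?thesis by simp
    next
      assume a: "k1 + i \<in> snd ` N" "k1 + j \<notin> snd ` N" "rep N (k1 + i) = rep N (k1 + j)"
      have "rep N (k1 + i) < k1" using rep_in[OF a(1)] Nsub by auto
      then show ?thesis using a rep_notin by simp
    next
      assume a: "k1 + i \<notin> snd ` N" "k1 + j \<in> snd ` N" "rep N (k1 + i) = rep N (k1 + j)"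
      have "rep N (k1 + j) < k1" using rep_in[OF a(2)] Nsub by auto
      then show ?thesis using a rep_notin by simp
    next
      assume a: "k1 + i \<notin> snd ` N" "k1 + j \<notin> snd ` N" "rep N (k1 + i) = rep N (k1 + j)"
      then show ?thesis using rep_notin by simp
    qed
  qed
  show "{..<k1 + k2 - l} \<subseteq> \<rho> ` {..<k1} \<union> (\<lambda>i. \<rho> (k1 + i)) ` {..<k2}"
  proof
    fix y assume "y \<in> {..<k1 + k2 - l}"
    then have "y \<in> ?r ` ?S" unfolding rk(2) cardS .
    then obtain s where s: "s \<in> ?S" "y = ?r s" by auto
    have sK: "s < k1 + k2" and sn: "s \<notin> snd ` N" using s(1) by (auto simp: kept_def)
    have "y = \<rho> s" using s rep_notin[OF sn] by (simp add: \<rho>_def)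
    show "y \<in> \<rho> ` {..<k1} \<union> (\<lambda>i. \<rho> (k1 + i)) ` {..<k2}"
    proof (cases "s < k1")
      case True then show ?thesis using \<open>y = \<rho> s\<close> by auto
    next
      case False
      then obtain i where "s = k1 + i" "i < k2" using sK by (metis add_diff_inverse_nat add_less_cancel_left)
      then show ?thesis using \<open>y = \<rho> s\<close> by auto
    qed
  qed
qed

lemma contraction_eq:
  "contraction k1 k2 N (tensor k1 k2 f g) z =
     f (\<lambda>i\<in>{..<k1}. z (card {m \<in> kept k1 k2 N. m < rep N i}))
   * g (\<lambda>i\<in>{..<k2}. z (card {m \<in> kept k1 k2 N. m < rep N (k1 + i)}))"
proof -
  have a: "restrict (\<lambda>i\<in>{..<k1+k2}. z (card {m \<in> kept k1 k2 N. m < rep N i})) {..<k1}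
      = (\<lambda>i\<in>{..<k1}. z (card {m \<in> kept k1 k2 N. m < rep N i}))"
    by (auto simp: fun_eq_iff)
  have b: "restrict (\<lambda>i. (\<lambda>i\<in>{..<k1+k2}. z (card {m \<in> kept k1 k2 N. m < rep N i})) (k1 + i)) {..<k2}
      = (\<lambda>i\<in>{..<k2}. z (card {m \<in> kept k1 k2 N. m < rep N (k1 + i)}))"
    by (auto simp: fun_eq_iff)
  show ?thesis unfolding contraction_def tensor_def a b ..
qed



theorem lemma6:
  fixes M :: "'a measure" and a :: "nat \<Rightarrow> real" and P :: "nat \<Rightarrow> 'a measure"
    and k1 k2 l :: nat and f g :: "(nat \<Rightarrow> 'a) \<Rightarrow> real"
  assumes sf: "sigma_finite_measure M"
    and na: "non_atomic M"
    and inf: "emeasure M (space M) = \<infinity>"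
    and a_pos: "\<And>n. n \<ge> 1 \<Longrightarrow> a n > 0"
    and a_inf: "filterlim a at_top sequentially"
    and a_o: "(\<lambda>n. a n / real n) \<longlonglongrightarrow> 0"
    and P_prob: "\<And>n. n \<ge> 1 \<Longrightarrow> prob_space (P n)"
    and P_sets: "\<And>n. n \<ge> 1 \<Longrightarrow> sets (P n) = sets M"
    and mono: "\<And>n B. n \<ge> 1 \<Longrightarrow> B \<in> sets M \<Longrightarrow>
        ennreal (real n / a n) * emeasure (P n) B
          \<le> ennreal (real (Suc n) / a (Suc n)) * emeasure (P (Suc n)) B"
    and conv: "\<And>B. B \<in> sets M \<Longrightarrow>
        (\<lambda>n. ennreal (real n / a n) * emeasure (P n) B) \<longlonglongrightarrow> emeasure M B"
    and k1: "k1 \<ge> 1" and k2: "k2 \<ge> 1"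
    and f_meas: "f \<in> borel_measurable (PiM {..<k1} (\<lambda>_. M))"
    and f_L2: "integrable (PiM {..<k1} (\<lambda>_. M)) (\<lambda>x. (f x)\<^sup>2)"
    and g_meas: "g \<in> borel_measurable (PiM {..<k2} (\<lambda>_. M))"
    and g_L2: "integrable (PiM {..<k2} (\<lambda>_. M)) (\<lambda>x. (g x)\<^sup>2)"
    and cases: "(k1 \<noteq> k2 \<and> l \<le> min k1 k2) \<or> (k1 = k2 \<and> l < k1)"
  shows "(\<lambda>n. F_ln k1 k2 f g P a l n) \<longlonglongrightarrow> 0"
proof -
  define c where "c n = real n / a n" for n
  define K where "K = k1 + k2 - l"
  define Bd where "Bd = diagrams k1 k2 l"
  define \<rho> where "\<rho> N i = card {m \<in> kept k1 k2 N. m < rep N i}" for N i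
  define hN where "hN N z = f (\<lambda>i\<in>{..<k1}. z (\<rho> N i)) * g (\<lambda>i\<in>{..<k2}. z (\<rho> N (k1 + i)))" for N z
  have c_pos: "c n > 0" if "n \<ge> 1" for n using a_pos[OF that] that by (simp add: c_def)
  have c_inf: "filterlim c at_top sequentially"
  proof -
    have "filterlim (\<lambda>n. inverse (a n / real n)) at_top sequentially"
    proof (rule filterlim_inverse_at_top[OF a_o])
      show "eventually (\<lambda>n. 0 < a n / real n) sequentially"
        using eventually_ge_at_top[of 1] by eventually_elim (use a_pos in auto)
    qed
    then show ?thesis by (simp add: c_def[abs_def])
  qed
  have le: "ennreal (c n) * emeasure (P n) A \<le> emeasure M A" if n: "n \<ge> 1" and A: "A \<in> sets M" for n A
  proof -
    let ?X = "\<lambda>m. ennreal (real m / a m) * emeasure (P m) A"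
    have "incseq (\<lambda>j. ?X (j + n))"
    proof (rule incseq_SucI)
      fix j
      have "j + n \<ge> 1" using n by simp
      from mono[OF this A] show "?X (j + n) \<le> ?X (Suc j + n)" by simp
    qed
    moreover have "(\<lambda>j. ?X (j + n)) \<longlonglongrightarrow> emeasure M A"
      by (rule LIMSEQ_ignore_initial_segment[OF conv[OF A]])
    ultimately have "?X (0 + n) \<le> emeasure M A" by (rule incseq_le)
    then show ?thesis by (simp add: c_def)
  qed
  have KK: "2 * K > k1 + k2" and lk1: "l \<le> k1" and lk2: "l \<le> k2"
    using cases by (auto simp: K_def)
  have finB: "finite Bd"
  proof (rule finite_subset)
    show "Bd \<subseteq> Pow ({..<k1} \<times> {k1..<k1+k2})" by (auto simp: Bd_def diagrams_def)
  qed simp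
  note df = diagram_facts[of _ k1 k2 l, folded \<rho>_def]
  have evN: "eventually (\<lambda>n. ennreal (c n powr (real (k1 + k2) / 2)) *
      (\<integral>\<^sup>+z. ennreal \<bar>hN N z\<bar> \<partial>PiM {..<K} (\<lambda>_. P n)) \<le> ennreal \<epsilon>) sequentially"
    if N: "N \<in> Bd" and e: "\<epsilon> > 0" for N \<epsilon>
    unfolding hN_def
    by (rule core[OF sf P_prob P_sets c_pos le c_inf f_meas f_L2 g_meas g_L2])
       (use N e KK df[of N] in \<open>simp_all add: Bd_def K_def\<close>)
  have main: "eventually (\<lambda>n. \<bar>F_ln k1 k2 f g P a l n\<bar> \<le> \<epsilon>) sequentially" if e: "\<epsilon> > 0" for \<epsilon>
  proof -
    have "eventually (\<lambda>n. \<forall>N\<in>Bd. ennreal (c n powr (real (k1 + k2) / 2)) *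
      (\<integral>\<^sup>+z. ennreal \<bar>hN N z\<bar> \<partial>PiM {..<K} (\<lambda>_. P n)) \<le> ennreal \<epsilon>) sequentially"
      using finB evN e by (intro eventually_ball_finite) auto
    then show ?thesis using eventually_ge_at_top[of 1]
    proof eventually_elim
      case (elim n)
      let ?Q = "PiM {..<K} (\<lambda>_. P n)"
      define D where "D = c n powr (real (k1 + k2) / 2)"
      have D0: "D \<ge> 0" by (simp add: D_def)
      define H where "H z = 1 / real (card Bd) * (\<Sum>N\<in>Bd. hN N z)" for z
      have Ps: "sets (P n) = sets M" using P_sets elim(2) by simp
      have hm: "(\<lambda>z. hN N z) \<in> borel_measurable ?Q" if "N \<in> Bd" for N
      proof -
        have "(\<lambda>z. f (\<lambda>i\<in>{..<k1}. z (\<rho> N i))) \<in> borel_measurable ?Q"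
          by (rule comp_meas[OF Ps _ f_meas]) (use df[of N] that in \<open>simp_all add: Bd_def K_def\<close>)
        moreover have "(\<lambda>z. g (\<lambda>i\<in>{..<k2}. z (\<rho> N (k1 + i)))) \<in> borel_measurable ?Q"
          by (rule comp_meas[OF Ps _ g_meas, of "\<lambda>i. \<rho> N (k1 + i)"]) (use df[of N] that in \<open>simp_all add: Bd_def K_def\<close>)
        ultimately show ?thesis unfolding hN_def by measurable
      qed
      have Feq: "F_ln k1 k2 f g P a l n = D * integral\<^sup>L ?Q H"
        unfolding F_ln_def D_def H_def c_def K_def Bd_def hN_def \<rho>_def contraction_eq ..
      have I1: "ennreal \<bar>integral\<^sup>L ?Q H\<bar> \<le> (\<integral>\<^sup>+z. ennreal \<bar>H z\<bar> \<partial>?Q)"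
      proof (cases "integrable ?Q H")
        case True
        then show ?thesis using integral_norm_bound_ennreal[OF True] by simp
      next
        case False
        then show ?thesis by (simp add: not_integrable_integral_eq)
      qed
      have I2: "(\<integral>\<^sup>+z. ennreal \<bar>H z\<bar> \<partial>?Q) \<le> (\<integral>\<^sup>+z. ennreal (1 / real (card Bd)) * (\<Sum>N\<in>Bd. ennreal \<bar>hN N z\<bar>) \<partial>?Q)"
      proof (rule nn_integral_mono)
        fix z
        have "\<bar>H z\<bar> \<le> 1 / real (card Bd) * (\<Sum>N\<in>Bd. \<bar>hN N z\<bar>)"
          unfolding H_def abs_mult by (simp add: divide_right_mono sum_abs)
        then have "ennreal \<bar>H z\<bar> \<le> ennreal (1 / real (card Bd) * (\<Sum>N\<in>Bd. \<bar>hN N z\<bar>))"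
          by (rule ennreal_leI)
        also have "\<dots> = ennreal (1 / real (card Bd)) * (\<Sum>N\<in>Bd. ennreal \<bar>hN N z\<bar>)"
          by (subst sum_ennreal, simp, subst ennreal_mult[symmetric]) (auto simp: sum_nonneg)
        finally show "ennreal \<bar>H z\<bar> \<le> ennreal (1 / real (card Bd)) * (\<Sum>N\<in>Bd. ennreal \<bar>hN N z\<bar>)" .
      qed
      also have "\<dots> = ennreal (1 / real (card Bd)) * (\<Sum>N\<in>Bd. (\<integral>\<^sup>+z. ennreal \<bar>hN N z\<bar> \<partial>?Q))"
      proof -
        have m: "(\<lambda>z. ennreal \<bar>hN N z\<bar>) \<in> borel_measurable ?Q" if "N \<in> Bd" for N
          using hm[OF that] by measurable
        have "(\<lambda>z. \<Sum>N\<in>Bd. ennreal \<bar>hN N z\<bar>) \<in> borel_measurable ?Q"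
          using m by (rule borel_measurable_sum)
        note ms = this
        show ?thesis
          by (simp only: nn_integral_cmult[OF ms] nn_integral_sum[OF m])
      qed
      finally have J: "ennreal \<bar>integral\<^sup>L ?Q H\<bar> \<le> ennreal (1 / real (card Bd)) * (\<Sum>N\<in>Bd. (\<integral>\<^sup>+z. ennreal \<bar>hN N z\<bar> \<partial>?Q))"
        using I1 by (rule order_trans[rotated])
      have "ennreal D * ennreal \<bar>integral\<^sup>L ?Q H\<bar>
          \<le> ennreal D * (ennreal (1 / real (card Bd)) * (\<Sum>N\<in>Bd. (\<integral>\<^sup>+z. ennreal \<bar>hN N z\<bar> \<partial>?Q)))"
        using J by (rule mult_left_mono) simp
      also have "\<dots> = ennreal (1 / real (card Bd)) * (\<Sum>N\<in>Bd. ennreal D * (\<integral>\<^sup>+z. ennreal \<bar>hN N z\<bar> \<partial>?Q))"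
        by (simp only: sum_distrib_left mult.left_commute)
      also have "\<dots> \<le> ennreal (1 / real (card Bd)) * (\<Sum>N\<in>Bd. ennreal \<epsilon>)"
        using elim(1) by (intro mult_left_mono sum_mono) (auto simp: D_def)
      also have "\<dots> = ennreal (1 / real (card Bd) * (real (card Bd) * \<epsilon>))"
      proof -
        have "(\<Sum>N\<in>Bd. ennreal \<epsilon>) = ennreal (\<Sum>N\<in>Bd. \<epsilon>)"
          by (rule sum_ennreal) (use e in simp)
        also have "(\<Sum>N\<in>Bd. \<epsilon>) = real (card Bd) * \<epsilon>" by simp
        finally show ?thesis
          using e by (simp only: ennreal_mult[symmetric]) (rule ennreal_mult[symmetric]; simp)
      qed
      also have "\<dots> \<le> ennreal \<epsilon>"
        using e by (intro ennreal_leI) (cases "card Bd = 0", auto)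
      finally have "ennreal (D * \<bar>integral\<^sup>L ?Q H\<bar>) \<le> ennreal \<epsilon>"
        using D0 by (simp add: ennreal_mult)
      then have "D * \<bar>integral\<^sup>L ?Q H\<bar> \<le> \<epsilon>" using e by (simp add: ennreal_le_iff)
      then show ?case using D0 by (simp add: Feq abs_mult)
    qed
  qed
  show ?thesis
  proof (rule tendstoI)
    fix e :: real assume "e > 0"
    then have "eventually (\<lambda>n. \<bar>F_ln k1 k2 f g P a l n\<bar> \<le> e / 2) sequentially" by (intro main) simp
    then show "eventually (\<lambda>n. dist (F_ln k1 k2 f g P a l n) 0 < e) sequentially"
      by eventually_elim (use \<open>e > 0\<close> in simp)
  qed
qed


end
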